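(* Let $G=(V,E)$ be a multigraph (loops and parallel edges allowed) with $n$ vertices, $m$ edges and $c(G)$ components. Then $$P(\mathcal{H}_G,\lambda)=\lambda^{m-n+2c(G)}\cdot(-1)^{n+c(G)}\cdot T_G\!\left(1-\lambda^2,\tfrac{\lambda-1}{\lambda}\right).$$
   Context: A hypergraph $\mathcal{H}=(\mathcal{V},\mathcal{E})$ consists of a finite vertex set $\mathcal{V}$ and a set $\mathcal{E}$ of subsets of $\mathcal{V}$, each of size at least $1$, called edges. For a positive integer $\lambda$, a weak proper $\lambda$-colouring of $\mathcal{H}$ is a map $\phi:\mathcal{V}\to\{1,\dots,\lambda\}$ such that $|\{\phi(v):v\in e\}|>1$ for every $e\in\mathcal{E}$. $P(\mathcal{H},\lambda)$ denotes the number of weak proper $\lambda$-colourings of $\mathcal{H}$; it is a polynomial in $\lambda$ of degree $|\mathcal{V}|$. For a multigraph $G=(V,E)$, $\mathcal{H}_G$ is the hypergraph with vertex set $V\cup\{w_e:e\in E\}$ (the $w_e$ being distinct new vertices) and edge set $\{\{u_e,v_e,w_e\}: e\in E\}$, where $u_e,v_e$ are the ends of $e$ (so a loop $e$ at $u$ gives the edge $\{u,w_e\}$). The Tutte polynomial is $T_G(x,y)=\sum_{A\subseteq E}(x-1)^{r(E)-r(A)}(y-1)^{|A|-r(A)}$, where $r(A)=|V|-c(A)$ and $c(A)$ is the number of components of the spanning subgraph $(V,A)$; $c(G)=c(E)$. *)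

theory Defs
  imports Complex_Main "HOL-Library.FuncSet"
begin

text \<open>A multigraph is given by a finite vertex set V, a finite edge set E and a map
  ends assigning to each edge its (unordered, here stored as a pair) ends; a loop e has
  fst (ends e) = snd (ends e). Parallel edges are distinct elements of E with equal ends.\<close>

definition multigraph :: "'v set \<Rightarrow> 'e set \<Rightarrow> ('e \<Rightarrow> 'v \<times> 'v) \<Rightarrow> bool" where
  "multigraph V E ends \<longleftrightarrow> finite V \<and> finite E \<and>
     (\<forall>e\<in>E. fst (ends e) \<in> V \<and> snd (ends e) \<in> V)"

definition adj :: "('e \<Rightarrow> 'v \<times> 'v) \<Rightarrow> 'e set \<Rightarrow> ('v \<times> 'v) set" where
  "adj ends A = {(u, v). \<exists>e\<in>A. ends e = (u, v) \<or> ends e = (v, u)}"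

definition conn_rel :: "'v set \<Rightarrow> ('e \<Rightarrow> 'v \<times> 'v) \<Rightarrow> 'e set \<Rightarrow> ('v \<times> 'v) set" where
  "conn_rel V ends A = Id_on V \<union> (adj ends A \<inter> (V \<times> V))\<^sup>+"

definition ncomp :: "'v set \<Rightarrow> ('e \<Rightarrow> 'v \<times> 'v) \<Rightarrow> 'e set \<Rightarrow> nat" where
  "ncomp V ends A = card (V // conn_rel V ends A)"

definition rank :: "'v set \<Rightarrow> ('e \<Rightarrow> 'v \<times> 'v) \<Rightarrow> 'e set \<Rightarrow> nat" where
  "rank V ends A = card V - ncomp V ends A"

definition tutte :: "'v set \<Rightarrow> 'e set \<Rightarrow> ('e \<Rightarrow> 'v \<times> 'v) \<Rightarrow> real \<Rightarrow> real \<Rightarrow> real" where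
  "tutte V E ends x y =
     (\<Sum>A\<in>Pow E. (x - 1) ^ (rank V ends E - rank V ends A) *
                 (y - 1) ^ (card A - rank V ends A))"

definition chrom_hyp :: "'a set \<Rightarrow> 'a set set \<Rightarrow> nat \<Rightarrow> nat" where
  "chrom_hyp VH EH lam =
     card {\<phi> \<in> VH \<rightarrow>\<^sub>E {1..lam}. \<forall>e\<in>EH. card (\<phi> ` e) > 1}"

text \<open>The hypergraph H_G: vertices V plus a new vertex w_e = Inr e for each edge.\<close>

definition HG_vertices :: "'v set \<Rightarrow> 'e set \<Rightarrow> ('v + 'e) set" where
  "HG_vertices V E = Inl ` V \<union> Inr ` E"

definition HG_edges :: "'e set \<Rightarrow> ('e \<Rightarrow> 'v \<times> 'v) \<Rightarrow> ('v + 'e) set set" where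
  "HG_edges E ends = (\<lambda>e. {Inl (fst (ends e)), Inl (snd (ends e)), Inr e}) ` E"

end

theory Submission
  imports Defs
begin

definition eqset :: "'v set \<Rightarrow> ('e \<Rightarrow> 'v \<times> 'v) \<Rightarrow> 'e set \<Rightarrow> nat \<Rightarrow> ('v \<Rightarrow> nat) set" where
  "eqset V ends A lam = {f \<in> V \<rightarrow>\<^sub>E {1..lam}. \<forall>e\<in>A. f (fst (ends e)) = f (snd (ends e))}"

lemma conn_equiv: "equiv V (conn_rel V ends A)"
proof -
  let ?r = "adj ends A \<inter> (V \<times> V)"
  have sub: "?r\<^sup>+ \<subseteq> V \<times> V" by (rule trancl_subset_Sigma) blast
  have "sym ?r" unfolding adj_def sym_def by blast
  hence s: "sym (?r\<^sup>+)" by (rule sym_trancl)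
  show ?thesis unfolding equiv_def conn_rel_def
  proof (intro conjI)
    show "Id_on V \<union> ?r\<^sup>+ \<subseteq> V \<times> V" using sub Id_on_subset_Times by blast
    show "refl_on V (Id_on V \<union> ?r\<^sup>+)" unfolding refl_on_def by blast
    show "sym (Id_on V \<union> ?r\<^sup>+)" using s unfolding sym_def by blast
    show "trans (Id_on V \<union> ?r\<^sup>+)"
    proof (rule transI)
      fix x y z assume xy: "(x, y) \<in> Id_on V \<union> ?r\<^sup>+" and yz: "(y, z) \<in> Id_on V \<union> ?r\<^sup>+"
      show "(x, z) \<in> Id_on V \<union> ?r\<^sup>+"
      proof (cases "(x, y) \<in> Id_on V")
        case True thus ?thesis using yz by (simp add: Id_on_iff)
      next
        case False
        hence xy': "(x, y) \<in> ?r\<^sup>+" using xy by blast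
        show ?thesis
        proof (cases "(y, z) \<in> Id_on V")
          case True thus ?thesis using xy' by (simp add: Id_on_iff)
        next
          case False
          hence "(y, z) \<in> ?r\<^sup>+" using yz by blast
          thus ?thesis by (rule UnI2[OF trancl_trans[OF xy']])
        qed
      qed
    qed
  qed
qed

lemma conn_resp:
  assumes "\<forall>e\<in>A. f (fst (ends e)) = f (snd (ends e))" and "(x, y) \<in> conn_rel V ends A"
  shows "f x = f y"
proof -
  have edge: "f a = f b" if "(a, b) \<in> adj ends A" for a b
  proof -
    have "\<exists>e\<in>A. ends e = (a, b) \<or> ends e = (b, a)" using that unfolding adj_def by simp
    then obtain e where e: "e \<in> A" "ends e = (a, b) \<or> ends e = (b, a)" by blast
    have "f (fst (ends e)) = f (snd (ends e))" using e(1) assms(1) by blast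
    thus ?thesis using e(2) by auto
  qed
  have "(x, y) \<in> (adj ends A \<inter> (V \<times> V))\<^sup>+ \<Longrightarrow> f x = f y"
  proof (induction rule: trancl_induct)
    case (base y) thus ?case by (intro edge) blast
  next
    case (step y z)
    have "f y = f z" using step.hyps(2) by (intro edge) blast
    thus ?case using step.IH by simp
  qed
  thus ?thesis using assms(2) unfolding conn_rel_def by auto
qed

lemma conn_edge:
  assumes "e \<in> A" "fst (ends e) \<in> V" "snd (ends e) \<in> V"
  shows "(fst (ends e), snd (ends e)) \<in> conn_rel V ends A"
proof -
  obtain a b where ab: "ends e = (a, b)" by (cases "ends e")
  have "(a, b) \<in> adj ends A" unfolding adj_def using assms(1) ab by blast
  moreover have "(a, b) \<in> V \<times> V" using assms(2,3) ab by simp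
  ultimately have "(a, b) \<in> (adj ends A \<inter> (V \<times> V))\<^sup>+" by blast
  thus ?thesis unfolding conn_rel_def using ab by simp
qed

lemma eqset_alt:
  assumes "\<forall>e\<in>A. fst (ends e) \<in> V \<and> snd (ends e) \<in> V"
  shows "eqset V ends A lam = {f \<in> V \<rightarrow>\<^sub>E {1..lam}. \<forall>(x,y)\<in>conn_rel V ends A. f x = f y}"
proof -
  have iff: "(\<forall>e\<in>A. f (fst (ends e)) = f (snd (ends e))) \<longleftrightarrow> (\<forall>(x,y)\<in>conn_rel V ends A. f x = f y)" for f :: "_ \<Rightarrow> nat"
  proof
    assume h: "\<forall>e\<in>A. f (fst (ends e)) = f (snd (ends e))"
    show "\<forall>(x,y)\<in>conn_rel V ends A. f x = f y"
    proof (clarify)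
      fix x y assume "(x, y) \<in> conn_rel V ends A"
      thus "f x = f y" by (rule conn_resp[OF h])
    qed
  next
    assume h: "\<forall>(x,y)\<in>conn_rel V ends A. f x = f y"
    show "\<forall>e\<in>A. f (fst (ends e)) = f (snd (ends e))"
    proof
      fix e assume eA: "e \<in> A"
      have "(fst (ends e), snd (ends e)) \<in> conn_rel V ends A"
        using assms eA by (intro conn_edge) auto
      thus "f (fst (ends e)) = f (snd (ends e))" using h by blast
    qed
  qed
  show ?thesis unfolding eqset_def by (simp only: iff)
qed

lemma card_eqset:
  assumes "finite V" "\<forall>e\<in>A. fst (ends e) \<in> V \<and> snd (ends e) \<in> V"
  shows "card (eqset V ends A lam) = lam ^ ncomp V ends A"
proof -
  define R where "R = conn_rel V ends A"
  have eq: "equiv V R" unfolding R_def by (rule conn_equiv)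
  define B where "B = {1..lam}"
  define F where "F = (\<lambda>g :: _ \<Rightarrow> nat. \<lambda>x. if x \<in> V then g (R``{x}) else undefined)"
  define G where "G = (\<lambda>f :: _ \<Rightarrow> nat. \<lambda>X. if X \<in> V//R then f (SOME x. x \<in> X) else undefined)"
  have S: "eqset V ends A lam = {f \<in> V \<rightarrow>\<^sub>E B. \<forall>(x,y)\<in>R. f x = f y}"
    unfolding R_def B_def by (rule eqset_alt[OF assms(2)])
  have some_in: "(SOME x. x \<in> X) \<in> X" "(SOME x. x \<in> X) \<in> V" "R``{SOME x. x \<in> X} = X" if X: "X \<in> V//R" for X
  proof -
    obtain x0 where x0: "x0 \<in> V" "X = R``{x0}" using X unfolding quotient_def by blast
    have "x0 \<in> X" using x0 eq equiv_class_self by fast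
    thus s: "(SOME x. x \<in> X) \<in> X" by (metis someI_ex)
    show "(SOME x. x \<in> X) \<in> V" using s x0 eq unfolding equiv_def by auto
    show "R``{SOME x. x \<in> X} = X" using s x0 eq by (metis equiv_class_eq Image_singleton_iff)
  qed
  have "bij_betw F (V//R \<rightarrow>\<^sub>E B) (eqset V ends A lam)"
  proof (rule bij_betw_byWitness[where f'=G])
    show "\<forall>g\<in>V//R \<rightarrow>\<^sub>E B. G (F g) = g"
    proof
      fix g assume g: "g \<in> V//R \<rightarrow>\<^sub>E B"
      show "G (F g) = g"
      proof
        fix X show "G (F g) X = g X"
        proof (cases "X \<in> V//R")
          case True
          have "G (F g) X = F g (SOME x. x \<in> X)" unfolding G_def using True by simp
          also have "\<dots> = g (R``{SOME x. x \<in> X})" unfolding F_def using some_in(2)[OF True] by simp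
          also have "\<dots> = g X" using some_in(3)[OF True] by simp
          finally show ?thesis .
        next
          case False
          thus ?thesis using g unfolding G_def by (simp add: PiE_def extensional_def)
        qed
      qed
    qed
    show "\<forall>f\<in>eqset V ends A lam. F (G f) = f"
    proof
      fix f assume f: "f \<in> eqset V ends A lam"
      show "F (G f) = f"
      proof
        fix x show "F (G f) x = f x"
        proof (cases "x \<in> V")
          case True
          have q: "R``{x} \<in> V//R" using True by (rule quotientI)
          have "(x, SOME y. y \<in> R``{x}) \<in> R" using some_in(1)[OF q] by auto
          thus ?thesis using True q f S unfolding F_def G_def by auto
        next
          case False thus ?thesis using f S unfolding F_def G_def by auto
        qed
      qed
    qed
    show "F ` (V//R \<rightarrow>\<^sub>E B) \<subseteq> eqset V ends A lam"
    proof
      fix f assume "f \<in> F ` (V//R \<rightarrow>\<^sub>E B)"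
      then obtain g where g: "g \<in> V//R \<rightarrow>\<^sub>E B" "f = F g" by auto
      have "\<forall>(x,y)\<in>R. f x = f y"
      proof (clarify)
        fix x y assume xy: "(x, y) \<in> R"
        have xV: "x \<in> V" "y \<in> V" using xy eq unfolding equiv_def by auto
        have "R``{x} = R``{y}" using eq xy by (rule equiv_class_eq)
        thus "f x = f y" using xV g(2) unfolding F_def by simp
      qed
      moreover have "f \<in> V \<rightarrow>\<^sub>E B"
      proof
        fix x assume "x \<in> V"
        hence "R``{x} \<in> V//R" by (rule quotientI)
        thus "f x \<in> B" using g \<open>x \<in> V\<close> unfolding F_def by auto
      next
        fix x assume "x \<notin> V" thus "f x = undefined" using g unfolding F_def by simp
      qed
      ultimately show "f \<in> eqset V ends A lam" using S by auto
    qed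
    show "G ` eqset V ends A lam \<subseteq> V//R \<rightarrow>\<^sub>E B"
    proof
      fix h assume "h \<in> G ` eqset V ends A lam"
      then obtain f where f: "f \<in> eqset V ends A lam" and h: "h = G f" by auto
      have fP: "f \<in> V \<rightarrow>\<^sub>E B" using f S by auto
      show "h \<in> V//R \<rightarrow>\<^sub>E B"
      proof
        fix X assume X: "X \<in> V//R"
        thus "h X \<in> B" using some_in(2)[OF X] fP h unfolding G_def by auto
      next
        fix X assume "X \<notin> V//R" thus "h X = undefined" using h unfolding G_def by simp
      qed
    qed
  qed
  hence "card (eqset V ends A lam) = card (V//R \<rightarrow>\<^sub>E B)" by (simp add: bij_betw_same_card)
  also have "\<dots> = lam ^ card (V//R)"
    using finite_quotient[OF assms(1) equiv_type[OF eq]] unfolding B_def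
    by (simp add: card_funcsetE)
  finally show ?thesis unfolding R_def ncomp_def .
qed

lemma eqset_sub: "eqset V ends A lam \<subseteq> V \<rightarrow>\<^sub>E {1..lam}" unfolding eqset_def by auto

lemma eqset_empty: "eqset V ends {} lam = V \<rightarrow>\<^sub>E {1..lam}" unfolding eqset_def by auto

lemma eqset_mono: "A \<subseteq> A' \<Longrightarrow> eqset V ends A' lam \<subseteq> eqset V ends A lam" unfolding eqset_def by auto

lemma finite_eqset: "finite V \<Longrightarrow> finite (eqset V ends A lam)"
  by (rule finite_subset[OF eqset_sub]) (auto intro: finite_PiE)

lemma ncomp_le_card:
  assumes "finite V" "\<forall>e\<in>A. fst (ends e) \<in> V \<and> snd (ends e) \<in> V"
  shows "ncomp V ends A \<le> card V"
proof -
  have "card (eqset V ends A 2) \<le> card (V \<rightarrow>\<^sub>E {1..(2::nat)})"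
    by (rule card_mono[OF _ eqset_sub]) (use assms in \<open>auto intro: finite_PiE\<close>)
  hence "(2::nat) ^ ncomp V ends A \<le> 2 ^ card V"
    using assms by (simp add: card_eqset card_funcsetE)
  thus ?thesis by simp
qed

lemma ncomp_anti:
  assumes "finite V" "\<forall>e\<in>A'. fst (ends e) \<in> V \<and> snd (ends e) \<in> V" "A \<subseteq> A'"
  shows "ncomp V ends A' \<le> ncomp V ends A"
proof -
  have a: "\<forall>e\<in>A. fst (ends e) \<in> V \<and> snd (ends e) \<in> V" using assms by auto
  have "card (eqset V ends A' 2) \<le> card (eqset V ends A 2)"
    by (rule card_mono[OF finite_eqset eqset_mono]) (use assms in auto)
  hence "(2::nat) ^ ncomp V ends A' \<le> 2 ^ ncomp V ends A"
    using assms a by (simp add: card_eqset)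
  thus ?thesis by simp
qed

lemma ncomp_empty:
  assumes "finite V"
  shows "ncomp V ends {} = card V"
proof -
  have "(2::nat) ^ ncomp V ends {} = 2 ^ card V"
    using card_eqset[OF assms, of "{}" ends 2] by (simp add: eqset_empty card_funcsetE assms)
  thus ?thesis by simp
qed

lemma ncomp_insert:
  assumes V: "finite V" and A: "\<forall>e\<in>insert e A. fst (ends e) \<in> V \<and> snd (ends e) \<in> V"
  shows "ncomp V ends A \<le> ncomp V ends (insert e A) + 1"
proof -
  define u where "u = fst (ends e)"
  define v where "v = snd (ends e)"
  define R where "R = conn_rel V ends A"
  define C where "C = R``{v}"
  have eq: "equiv V R" unfolding R_def by (rule conn_equiv)
  have uV: "u \<in> V" and vV: "v \<in> V" using A u_def v_def by auto
  have CV: "C \<subseteq> V" using eq unfolding C_def equiv_def by auto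
  have vC: "v \<in> C" unfolding C_def by (rule equiv_class_self[OF eq vV])
  define h where "h = (\<lambda>f :: _ \<Rightarrow> nat. ((\<lambda>x. if x \<in> C then f u else f x), f v))"
  have Ares: "\<forall>e\<in>A. fst (ends e) \<in> V \<and> snd (ends e) \<in> V" using A by auto
  have "inj_on h (eqset V ends A 2)"
  proof (rule inj_onI)
    fix f1 f2 assume f1: "f1 \<in> eqset V ends A 2" and f2: "f2 \<in> eqset V ends A 2" and hh: "h f1 = h f2"
    have v12: "f1 v = f2 v" using hh unfolding h_def by auto
    show "f1 = f2"
    proof
      fix x show "f1 x = f2 x"
      proof (cases "x \<in> C")
        case True
        hence "(v, x) \<in> R" unfolding C_def by auto
        hence vx: "(v, x) \<in> conn_rel V ends A" unfolding R_def by simp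
        have h1: "\<forall>e\<in>A. f1 (fst (ends e)) = f1 (snd (ends e))" using f1 unfolding eqset_def by blast
        have h2: "\<forall>e\<in>A. f2 (fst (ends e)) = f2 (snd (ends e))" using f2 unfolding eqset_def by blast
        have "f1 v = f1 x" "f2 v = f2 x" using conn_resp[OF h1 vx] conn_resp[OF h2 vx] by simp_all
        thus ?thesis using v12 by simp
      next
        case False
        have "(\<lambda>x. if x \<in> C then f1 u else f1 x) x = (\<lambda>x. if x \<in> C then f2 u else f2 x) x"
        proof -
          have "fst (h f1) = fst (h f2)" using hh by simp
          hence "(\<lambda>x. if x \<in> C then f1 u else f1 x) = (\<lambda>x. if x \<in> C then f2 u else f2 x)"
            unfolding h_def by simp
          thus ?thesis by (rule fun_cong)
        qed
        thus ?thesis using False by simp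
      qed
    qed
  qed
  moreover have "h ` eqset V ends A 2 \<subseteq> eqset V ends (insert e A) 2 \<times> {1..2}"
  proof
    fix p assume "p \<in> h ` eqset V ends A 2"
    then obtain f where f: "f \<in> eqset V ends A 2" and p: "p = h f" by auto
    have fP: "f \<in> V \<rightarrow>\<^sub>E {1..2}" and fA: "\<forall>e\<in>A. f (fst (ends e)) = f (snd (ends e))"
      using f unfolding eqset_def by auto
    define g where "g = (\<lambda>x. if x \<in> C then f u else f x)"
    have "g \<in> V \<rightarrow>\<^sub>E {1..2}"
    proof
      fix x assume "x \<in> V" thus "g x \<in> {1..2}" using fP uV unfolding g_def by (cases "x \<in> C") auto
    next
      fix x assume "x \<notin> V"
      hence "x \<notin> C" using CV by blast
      thus "g x = undefined" using PiE_arb[OF fP \<open>x \<notin> V\<close>] unfolding g_def by simp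
    qed
    moreover have "\<forall>e'\<in>insert e A. g (fst (ends e')) = g (snd (ends e'))"
    proof
      fix e' assume e': "e' \<in> insert e A"
      show "g (fst (ends e')) = g (snd (ends e'))"
      proof (cases "e' = e")
        case True thus ?thesis using vC unfolding g_def u_def v_def by auto
      next
        case False
        hence e'A: "e' \<in> A" using e' by auto
        have r: "(fst (ends e'), snd (ends e')) \<in> R" unfolding R_def using e'A Ares by (intro conn_edge) auto
        have "fst (ends e') \<in> C \<longleftrightarrow> snd (ends e') \<in> C"
        proof -
          have cl: "R``{fst (ends e')} = R``{snd (ends e')}" by (rule equiv_class_eq[OF eq r])
          have sR: "sym R" using eq unfolding equiv_def by blast
          have sw: "(a, b) \<in> R \<longleftrightarrow> (b, a) \<in> R" for a b using sR unfolding sym_def by blast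
          have "fst (ends e') \<in> C \<longleftrightarrow> v \<in> R``{fst (ends e')}" unfolding C_def Image_singleton_iff using sw by blast
          also have "\<dots> \<longleftrightarrow> v \<in> R``{snd (ends e')}" using cl by simp
          also have "\<dots> \<longleftrightarrow> snd (ends e') \<in> C" unfolding C_def Image_singleton_iff using sw by blast
          finally show ?thesis .
        qed
        moreover have "f (fst (ends e')) = f (snd (ends e'))" using fA e'A by blast
        ultimately show ?thesis unfolding g_def by simp
      qed
    qed
    ultimately have "g \<in> eqset V ends (insert e A) 2" unfolding eqset_def by auto
    moreover have "f v \<in> {1..2}" using fP vV by auto
    ultimately show "p \<in> eqset V ends (insert e A) 2 \<times> {1..2}" using p unfolding h_def g_def by simp
  qed
  ultimately have "card (eqset V ends A 2) \<le> card (eqset V ends (insert e A) 2 \<times> {1..(2::nat)})"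
    by (rule card_inj_on_le) (simp_all add: finite_eqset V)
  hence "(2::nat) ^ ncomp V ends A \<le> 2 ^ ncomp V ends (insert e A) * 2"
    using card_eqset[OF V Ares] card_eqset[OF V A] by (simp add: card_cartesian_product)
  hence "(2::nat) ^ ncomp V ends A \<le> 2 ^ (Suc (ncomp V ends (insert e A)))"
    by (simp only: power_Suc mult.commute)
  hence "ncomp V ends A \<le> Suc (ncomp V ends (insert e A))"
    by (subst (asm) power_increasing_iff) auto
  thus ?thesis by simp
qed

lemma card_le_edges_ncomp:
  assumes V: "finite V" and "finite A" and "\<forall>e\<in>A. fst (ends e) \<in> V \<and> snd (ends e) \<in> V"
  shows "card V \<le> card A + ncomp V ends A"
  using assms(2,3)
proof (induction A rule: finite_induct)
  case empty thus ?case using ncomp_empty[OF V, of ends] by simp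
next
  case (insert e A)
  have "ncomp V ends A \<le> ncomp V ends (insert e A) + 1" using ncomp_insert[OF V insert.prems] .
  moreover have "card V \<le> card A + ncomp V ends A" using insert.IH insert.prems by simp
  ultimately show ?case using insert.hyps by simp
qed

lemma alg:
  fixes x :: real
  assumes x: "x \<noteq> 0" and h1: "N1 + 2*k1 = N2 + k2" and h2: "e1 + k1 + k2 = a + 2*cA"
  shows "x^N1 * (-1)^e1 * (-(x^2))^k1 * (-(inverse x))^k2 = (-1)^a * x^N2"
proof -
  have "x^N1 * (-1)^e1 * (-(x^2))^k1 * (-(inverse x))^k2
      = ((-1)^e1 * (-1)^k1 * (-1)^k2) * (x^N1 * x^(2*k1)) * inverse x ^ k2"
    by (simp add: power_minus[of "x^2"] power_minus[of "inverse x"] power_mult)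
  also have "(-1::real)^e1 * (-1)^k1 * (-1)^k2 = (-1)^(a + 2*cA)"
    by (simp only: h2[symmetric] power_add)
  also have "x^N1 * x^(2*k1) = x^N2 * x^k2" by (simp only: power_add[symmetric] h1)
  also have "(-1::real)^(a + 2*cA) = (-1)^a" by (simp add: power_add power_mult)
  finally show ?thesis using x by (simp add: power_inverse field_simps)
qed

lemma card3: "card {a, b, c} > 1 \<longleftrightarrow> \<not> (a = b \<and> c = a)"
  by (auto simp: card_insert_if)

lemma chrom_sum:
  assumes mg: "multigraph V E ends"
  shows "chrom_hyp (HG_vertices V E) (HG_edges E ends) lam =
    (\<Sum>f \<in> V \<rightarrow>\<^sub>E {1..lam}. \<Prod>e\<in>E. (if f (fst (ends e)) = f (snd (ends e)) then lam - 1 else lam))"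
proof -
  have fV: "finite V" and fE: "finite E" and ends: "\<And>e. e \<in> E \<Longrightarrow> fst (ends e) \<in> V \<and> snd (ends e) \<in> V"
    using mg unfolding multigraph_def by auto
  define B where "B = {1..lam}"
  define K where "K = (\<lambda>f :: 'a \<Rightarrow> nat. \<lambda>e. if f (fst (ends e)) = f (snd (ends e)) then B - {f (fst (ends e))} else B)"
  define S where "S = (SIGMA f:(V \<rightarrow>\<^sub>E B). PiE E (K f))"
  define \<Phi> where "\<Phi> = {\<phi> \<in> HG_vertices V E \<rightarrow>\<^sub>E B. \<forall>he\<in>HG_edges E ends. card (\<phi> ` he) > 1}"
  define \<psi> where "\<psi> = (\<lambda>p :: ('a \<Rightarrow> nat) \<times> ('b \<Rightarrow> nat). case_sum (fst p) (snd p))"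
  have he: "(\<forall>he\<in>HG_edges E ends. card (\<phi> ` he) > 1) \<longleftrightarrow>
        (\<forall>e\<in>E. \<not> (\<phi> (Inl (fst (ends e))) = \<phi> (Inl (snd (ends e))) \<and> \<phi> (Inr e) = \<phi> (Inl (fst (ends e)))))" for \<phi> :: "'a + 'b \<Rightarrow> nat"
  proof -
    have "(\<forall>he\<in>HG_edges E ends. card (\<phi> ` he) > 1) \<longleftrightarrow>
      (\<forall>e\<in>E. card (\<phi> ` {Inl (fst (ends e)), Inl (snd (ends e)), Inr e}) > 1)"
      unfolding HG_edges_def by blast
    also have "\<dots> \<longleftrightarrow> (\<forall>e\<in>E. \<not> (\<phi> (Inl (fst (ends e))) = \<phi> (Inl (snd (ends e))) \<and> \<phi> (Inr e) = \<phi> (Inl (fst (ends e)))))"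
      by (simp only: image_insert image_empty card3)
    finally show ?thesis .
  qed
  have inj: "inj_on \<psi> S"
  proof (rule inj_onI)
    fix p q assume "p \<in> S" "q \<in> S" and pq: "\<psi> p = \<psi> q"
    have "fst p = fst q"
    proof
      fix x have "\<psi> p (Inl x) = \<psi> q (Inl x)" using pq by simp
      thus "fst p x = fst q x" unfolding \<psi>_def by simp
    qed
    moreover have "snd p = snd q"
    proof
      fix x have "\<psi> p (Inr x) = \<psi> q (Inr x)" using pq by simp
      thus "snd p x = snd q x" unfolding \<psi>_def by simp
    qed
    ultimately show "p = q" by (rule prod_eqI)
  qed
  have img: "\<psi> ` S = \<Phi>"
  proof
    show "\<psi> ` S \<subseteq> \<Phi>"
    proof
      fix \<phi> assume "\<phi> \<in> \<psi> ` S"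
      then obtain f g where fg: "f \<in> V \<rightarrow>\<^sub>E B" "g \<in> PiE E (K f)" and \<phi>: "\<phi> = case_sum f g"
        unfolding S_def \<psi>_def by auto
      have "\<phi> \<in> HG_vertices V E \<rightarrow>\<^sub>E B"
      proof
        fix z assume z: "z \<in> HG_vertices V E"
        show "\<phi> z \<in> B"
        proof (cases z)
          case (Inl x) thus ?thesis using z fg(1) \<phi> unfolding HG_vertices_def by auto
        next
          case (Inr e)
          hence eE: "e \<in> E" using z unfolding HG_vertices_def by auto
          have "g e \<in> K f e" using fg(2) eE by blast
          hence "g e \<in> B" unfolding K_def by (auto split: if_splits)
          thus ?thesis using Inr \<phi> by simp
        qed
      next
        fix z assume z: "z \<notin> HG_vertices V E"
        show "\<phi> z = undefined"
        proof (cases z)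
          case (Inl x) hence "x \<notin> V" using z unfolding HG_vertices_def by auto
          thus ?thesis using Inl \<phi> PiE_arb[OF fg(1)] by simp
        next
          case (Inr e) hence "e \<notin> E" using z unfolding HG_vertices_def by auto
          thus ?thesis using Inr \<phi> PiE_arb[OF fg(2)] by simp
        qed
      qed
      moreover have "\<forall>e\<in>E. \<not> (\<phi> (Inl (fst (ends e))) = \<phi> (Inl (snd (ends e))) \<and> \<phi> (Inr e) = \<phi> (Inl (fst (ends e))))"
      proof
        fix e assume eE: "e \<in> E"
        have "g e \<in> K f e" using fg(2) eE by blast
        thus "\<not> (\<phi> (Inl (fst (ends e))) = \<phi> (Inl (snd (ends e))) \<and> \<phi> (Inr e) = \<phi> (Inl (fst (ends e))))"
          unfolding K_def \<phi> by (auto split: if_splits)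
      qed
      ultimately show "\<phi> \<in> \<Phi>" unfolding \<Phi>_def using he by blast
    qed
  next
    show "\<Phi> \<subseteq> \<psi> ` S"
    proof
      fix \<phi> assume \<phi>: "\<phi> \<in> \<Phi>"
      have \<phi>P: "\<phi> \<in> HG_vertices V E \<rightarrow>\<^sub>E B" using \<phi> unfolding \<Phi>_def by blast
      have \<phi>E: "\<forall>e\<in>E. \<not> (\<phi> (Inl (fst (ends e))) = \<phi> (Inl (snd (ends e))) \<and> \<phi> (Inr e) = \<phi> (Inl (fst (ends e))))"
        using \<phi> he unfolding \<Phi>_def by blast
      define f where "f = (\<lambda>x. \<phi> (Inl x))"
      define g where "g = (\<lambda>e. \<phi> (Inr e))"
      have "f \<in> V \<rightarrow>\<^sub>E B"
      proof
        fix x assume "x \<in> V" thus "f x \<in> B" using \<phi>P unfolding f_def HG_vertices_def by auto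
      next
        fix x assume "x \<notin> V"
        hence "Inl x \<notin> HG_vertices V E" unfolding HG_vertices_def by auto
        thus "f x = undefined" unfolding f_def using PiE_arb[OF \<phi>P] by simp
      qed
      moreover have "g \<in> PiE E (K f)"
      proof
        fix e assume eE: "e \<in> E"
        have "g e \<in> B" using \<phi>P eE unfolding g_def HG_vertices_def by auto
        thus "g e \<in> K f e" using \<phi>E eE unfolding K_def f_def g_def by auto
      next
        fix e assume "e \<notin> E"
        hence "Inr e \<notin> HG_vertices V E" unfolding HG_vertices_def by auto
        thus "g e = undefined" unfolding g_def using PiE_arb[OF \<phi>P] by simp
      qed
      ultimately have "(f, g) \<in> S" unfolding S_def by blast
      moreover have "\<phi> = \<psi> (f, g)"
      proof
        fix z show "\<phi> z = \<psi> (f, g) z" unfolding \<psi>_def f_def g_def by (cases z) simp_all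
      qed
      ultimately show "\<phi> \<in> \<psi> ` S" by blast
    qed
  qed
  have "chrom_hyp (HG_vertices V E) (HG_edges E ends) lam = card \<Phi>"
    unfolding chrom_hyp_def \<Phi>_def B_def by simp
  also have "\<dots> = card S" using inj img card_image by fastforce
  also have "\<dots> = (\<Sum>f \<in> V \<rightarrow>\<^sub>E B. card (PiE E (K f)))"
    unfolding S_def
  proof (rule card_SigmaI)
    show "finite (V \<rightarrow>\<^sub>E B)" unfolding B_def using fV by (simp add: finite_PiE)
    show "\<forall>f\<in>V \<rightarrow>\<^sub>E B. finite (PiE E (K f))"
    proof
      fix f show "finite (PiE E (K f))" using fE by (rule finite_PiE) (simp add: K_def B_def)
    qed
  qed
  also have "\<dots> = (\<Sum>f \<in> V \<rightarrow>\<^sub>E B. \<Prod>e\<in>E. (if f (fst (ends e)) = f (snd (ends e)) then lam - 1 else lam))"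
  proof (rule sum.cong[OF refl])
    fix f assume f: "f \<in> V \<rightarrow>\<^sub>E B"
    have "card (PiE E (K f)) = (\<Prod>e\<in>E. card (K f e))" using fE by (rule card_PiE)
    also have "\<dots> = (\<Prod>e\<in>E. (if f (fst (ends e)) = f (snd (ends e)) then lam - 1 else lam))"
    proof (rule prod.cong[OF refl])
      fix e assume eE: "e \<in> E"
      have "f (fst (ends e)) \<in> B" using f ends[OF eE] by blast
      thus "card (K f e) = (if f (fst (ends e)) = f (snd (ends e)) then lam - 1 else lam)"
        unfolding K_def B_def by simp
    qed
    finally show "card (PiE E (K f)) = (\<Prod>e\<in>E. (if f (fst (ends e)) = f (snd (ends e)) then lam - 1 else lam))" .
  qed
  finally show ?thesis unfolding B_def .
qed

theorem theorem2:
  fixes V :: "'v set" and E :: "'e set" and ends :: "'e \<Rightarrow> 'v \<times> 'v" and lam :: nat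
  assumes "multigraph V E ends"
    and "lam \<ge> 1"
  shows "real (chrom_hyp (HG_vertices V E) (HG_edges E ends) lam) =
           real lam ^ (card E + 2 * ncomp V ends E - card V) *
           (-1) ^ (card V + ncomp V ends E) *
           tutte V E ends (1 - real lam ^ 2) ((real lam - 1) / real lam)"
proof -
  have fV: "finite V" and fE: "finite E" and endsE: "\<forall>e\<in>E. fst (ends e) \<in> V \<and> snd (ends e) \<in> V"
    using assms(1) unfolding multigraph_def by auto
  define B where "B = {1..lam}"
  define x where "x = real lam"
  have x0: "x \<noteq> 0" using assms(2) unfolding x_def by simp
  define n where "n = card V"
  define m where "m = card E"
  define c where "c = ncomp V ends E"
  define eq where "eq = (\<lambda>(f :: 'v \<Rightarrow> nat) e. f (fst (ends e)) = f (snd (ends e)))"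
  have facts: "ncomp V ends X \<le> n" "c \<le> ncomp V ends X" "n \<le> card X + ncomp V ends X" "card X \<le> m"
    if X: "X \<subseteq> E" for X
  proof -
    have eX: "\<forall>e\<in>X. fst (ends e) \<in> V \<and> snd (ends e) \<in> V" using X endsE by blast
    show "ncomp V ends X \<le> n" unfolding n_def using ncomp_le_card[OF fV eX] .
    show "c \<le> ncomp V ends X" unfolding c_def using ncomp_anti[OF fV endsE X] .
    show "n \<le> card X + ncomp V ends X" unfolding n_def
      using card_le_edges_ncomp[OF fV finite_subset[OF X fE] eX] .
    show "card X \<le> m" unfolding m_def using card_mono[OF fE X] .
  qed
  have fPi: "finite (V \<rightarrow>\<^sub>E B)" unfolding B_def using fV by (simp add: finite_PiE)
  have "real (chrom_hyp (HG_vertices V E) (HG_edges E ends) lam)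
      = (\<Sum>f \<in> V \<rightarrow>\<^sub>E B. \<Prod>e\<in>E. (x - (if eq f e then 1 else 0)))"
    unfolding chrom_sum[OF assms(1)] of_nat_sum of_nat_prod B_def
  proof (rule sum.cong[OF refl], rule prod.cong[OF refl])
    fix f e
    show "real (if f (fst (ends e)) = f (snd (ends e)) then lam - 1 else lam) = x - (if eq f e then 1 else 0)"
      using assms(2) unfolding x_def eq_def by (simp add: of_nat_diff)
  qed
  also have "\<dots> = (\<Sum>f \<in> V \<rightarrow>\<^sub>E B. \<Sum>X\<in>Pow E. (-1) ^ card X * (\<Prod>e\<in>X. (if eq f e then 1 else 0)) * (\<Prod>e\<in>E-X. x))"
    by (rule sum.cong[OF refl], rule prod_diff_conv_sum[OF fE])
  also have "\<dots> = (\<Sum>X\<in>Pow E. \<Sum>f \<in> V \<rightarrow>\<^sub>E B. (-1) ^ card X * (\<Prod>e\<in>X. (if eq f e then 1 else 0)) * (\<Prod>e\<in>E-X. x))"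
    by (rule sum.swap)
  also have "\<dots> = (\<Sum>X\<in>Pow E. (-1) ^ card X * x ^ (m - card X) * x ^ ncomp V ends X)"
  proof (rule sum.cong[OF refl])
    fix X assume "X \<in> Pow E"
    hence X: "X \<subseteq> E" by blast
    have eX: "\<forall>e\<in>X. fst (ends e) \<in> V \<and> snd (ends e) \<in> V" using X endsE by blast
    have fX: "finite X" using X fE by (rule finite_subset)
    have pr: "(\<Prod>e\<in>X. (if eq f e then 1 else 0)) = (if (\<forall>e\<in>X. eq f e) then 1 else (0::real))" for f
    proof (cases "\<forall>e\<in>X. eq f e")
      case True thus ?thesis by simp
    next
      case False
      then obtain e where "e \<in> X" "\<not> eq f e" by blast
      thus ?thesis using fX by (simp add: prod_zero)
    qed
    have "(\<Sum>f \<in> V \<rightarrow>\<^sub>E B. (-1) ^ card X * (\<Prod>e\<in>X. (if eq f e then 1 else 0)) * (\<Prod>e\<in>E-X. x))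
        = (-1) ^ card X * x ^ (m - card X) * (\<Sum>f \<in> V \<rightarrow>\<^sub>E B. (if (\<forall>e\<in>X. eq f e) then 1 else (0::real)))"
      using fX X unfolding pr m_def by (simp add: sum_distrib_left card_Diff_subset mult.commute mult.left_commute)
    also have "(\<Sum>f \<in> V \<rightarrow>\<^sub>E B. (if (\<forall>e\<in>X. eq f e) then 1 else (0::real))) = real (card (eqset V ends X lam))"
    proof -
      have "(\<Sum>f \<in> V \<rightarrow>\<^sub>E B. (if (\<forall>e\<in>X. eq f e) then 1 else (0::real))) = (\<Sum>f \<in> {f \<in> V \<rightarrow>\<^sub>E B. \<forall>e\<in>X. eq f e}. 1)"
        using sum.inter_filter[OF fPi, of "\<lambda>_. (1::real)" "\<lambda>f. \<forall>e\<in>X. eq f e"] by simp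
      also have "\<dots> = real (card {f \<in> V \<rightarrow>\<^sub>E B. \<forall>e\<in>X. eq f e})" by simp
      also have "{f \<in> V \<rightarrow>\<^sub>E B. \<forall>e\<in>X. eq f e} = eqset V ends X lam" unfolding eqset_def eq_def B_def by simp
      finally show ?thesis .
    qed
    also have "\<dots> = x ^ ncomp V ends X" unfolding x_def by (simp add: card_eqset[OF fV eX])
    finally show "(\<Sum>f \<in> V \<rightarrow>\<^sub>E B. (-1) ^ card X * (\<Prod>e\<in>X. (if eq f e then 1 else 0)) * (\<Prod>e\<in>E-X. x))
        = (-1) ^ card X * x ^ (m - card X) * x ^ ncomp V ends X" .
  qed
  also have "\<dots> = x ^ (m + 2 * c - n) * (-1) ^ (n + c) * tutte V E ends (1 - x ^ 2) ((x - 1) / x)"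
    unfolding tutte_def sum_distrib_left
  proof (rule sum.cong[OF refl])
    fix X assume "X \<in> Pow E"
    hence X: "X \<subseteq> E" by blast
    note f = facts[OF X]
    have cE: "c \<le> n" using facts[OF order_refl] unfolding c_def by simp
    have nmc: "n \<le> m + c" using facts[OF order_refl] unfolding c_def m_def by simp
    have a1: "1 - x^2 - 1 = -(x^2)" by simp
    have a2: "(x - 1) / x - 1 = - inverse x" using x0 by (simp add: field_simps)
    have h1: "(m + 2 * c - n) + 2 * (rank V ends E - rank V ends X) = (m - card X + ncomp V ends X) + (card X - rank V ends X)"
      unfolding rank_def c_def[symmetric] n_def[symmetric] using f cE nmc by linarith
    have h2: "(n + c) + (rank V ends E - rank V ends X) + (card X - rank V ends X) = card X + 2 * ncomp V ends X"
      unfolding rank_def c_def[symmetric] n_def[symmetric] using f cE nmc by linarith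
    have "x ^ (m + 2 * c - n) * (-1) ^ (n + c) * ((1 - x^2 - 1) ^ (rank V ends E - rank V ends X) * ((x - 1) / x - 1) ^ (card X - rank V ends X))
        = x ^ (m + 2 * c - n) * (-1) ^ (n + c) * (-(x^2)) ^ (rank V ends E - rank V ends X) * (- inverse x) ^ (card X - rank V ends X)"
      unfolding a1 a2 by (simp only: mult.assoc)
    also have "\<dots> = (-1) ^ card X * x ^ (m - card X + ncomp V ends X)"
      by (rule alg[OF x0 h1 h2])
    also have "\<dots> = (-1) ^ card X * x ^ (m - card X) * x ^ ncomp V ends X" by (simp add: power_add)
    finally show "(-1) ^ card X * x ^ (m - card X) * x ^ ncomp V ends X =
      x ^ (m + 2 * c - n) * (-1) ^ (n + c) * ((1 - x^2 - 1) ^ (rank V ends E - rank V ends X) * ((x - 1) / x - 1) ^ (card X - rank V ends X))" by simp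
  qed
  finally show ?thesis unfolding x_def m_def n_def c_def .
qed

end
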